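(* If the NNF DAG of $F$ (equivalently $\hat F(\mathbf{X},\neg\mathbf{X},\mathbf{Y})$) is in weak decomposable NNF (wDNNF), then $\delta_i=\Delta_i$ and $\gamma_i=\Gamma_i$ (as Boolean functions of $\mathbf{X}_{i+1}^n,\mathbf{Y}$) for every $i\in\{1,\ldots,n\}$.
   Context: $\mathbf{X}=(x_1,\ldots,x_n)$ are outputs and $\mathbf{Y}=(y_1,\ldots,y_m)$ inputs; $\mathbf{X}_i^j=(x_i,\ldots,x_j)$. $\Delta_i\equiv\neg\exists\mathbf{X}_1^{i-1}F(\mathbf{X}_1^{i-1},0,\mathbf{X}_{i+1}^n,\mathbf{Y})$ and $\Gamma_i\equiv\neg\exists\mathbf{X}_1^{i-1}F(\mathbf{X}_1^{i-1},1,\mathbf{X}_{i+1}^n,\mathbf{Y})$ (the constant occupies the position of $x_i$). An NNF formula uses only $\wedge,\vee$ and negations applied to variables, represented as a rooted DAG with $\wedge/\vee$ internal nodes and literal leaves. For an internal node representing subformula $\alpha$, $\mathrm{lits}(\alpha)$ is the set of literals labeling leaves having a path to that node. The NNF DAG is in wDNNF if for every $\wedge$-node representing $\alpha=\alpha_1\wedge\cdots\wedge\alpha_k$ there is no literal $l$ and distinct $p,q\in\{1,\ldots,k\}$ with $l\in\mathrm{lits}(\alpha_p)$ and $\neg l\in\mathrm{lits}(\alpha_q)$. $\hat F(\mathbf{X},\overline{\mathbf{X}},\mathbf{Y})$ is obtained from the NNF DAG of $F$ by replacing each leaf $\neg x_i$ ($x_i\in\mathbf{X}$) by a fresh variable $\overline{x_i}$.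 For length-$i$ bit-vectors $\mathbf{b},\mathbf{c}$, $\hat F(\mathbf{b},\mathbf{X}_{i+1}^n,\mathbf{c},\neg\mathbf{X}_{i+1}^n,\mathbf{Y})$ sets $(x_1,\ldots,x_i):=\mathbf{b}$, $(\overline{x_1},\ldots,\overline{x_i}):=\mathbf{c}$ and $\overline{x_k}:=\neg x_k$ for $k>i$. Define $\delta_i=\neg\hat F(\mathbf{1}^{i-1}0,\mathbf{X}_{i+1}^n,\mathbf{1}^i,\neg\mathbf{X}_{i+1}^n,\mathbf{Y})$ and $\gamma_i=\neg\hat F(\mathbf{1}^{i},\mathbf{X}_{i+1}^n,\mathbf{1}^{i-1}0,\neg\mathbf{X}_{i+1}^n,\mathbf{Y})$, where $\mathbf{1}^{i-1}0$ is $i-1$ ones followed by a $0$. *)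

theory Defs
  imports Main
begin

text \<open>A rooted NNF DAG is represented by its unfolding into a tree
(sharing does not affect the semantics nor the set lits of a node).\<close>

datatype 'v nnf = Lit bool 'v | And "'v nnf list" | Or "'v nnf list"

text \<open>Variables: Inl k is the output x_k (1 \<le> k \<le> n), Inr y is an input variable.\<close>

type_synonym 'y fvar = "nat + 'y"

fun eval :: "('v \<Rightarrow> bool) \<Rightarrow> 'v nnf \<Rightarrow> bool" where
  "eval s (Lit b v) = (if b then s v else \<not> s v)"
| "eval s (And fs) = (\<forall>f\<in>set fs. eval s f)"
| "eval s (Or fs) = (\<exists>f\<in>set fs. eval s f)"

fun vars :: "'v nnf \<Rightarrow> 'v set" where
  "vars (Lit b v) = {v}"
| "vars (And fs) = (\<Union>f\<in>set fs. vars f)"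
| "vars (Or fs) = (\<Union>f\<in>set fs. vars f)"

fun lits :: "'v nnf \<Rightarrow> (bool \<times> 'v) set" where
  "lits (Lit b v) = {(b, v)}"
| "lits (And fs) = (\<Union>f\<in>set fs. lits f)"
| "lits (Or fs) = (\<Union>f\<in>set fs. lits f)"

fun wDNNF :: "'v nnf \<Rightarrow> bool" where
  "wDNNF (Lit b v) = True"
| "wDNNF (And fs) = ((\<forall>f\<in>set fs. wDNNF f) \<and>
     (\<forall>p<length fs. \<forall>q<length fs. p \<noteq> q \<longrightarrow>
        (\<forall>b v. (b, v) \<in> lits (fs ! p) \<longrightarrow> (\<not> b, v) \<notin> lits (fs ! q))))"
| "wDNNF (Or fs) = (\<forall>f\<in>set fs. wDNNF f)"

text \<open>Evaluation of \<hat>F(X, Xbar, Y): a leaf \<not>x_k is replaced by the fresh variable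
xbar_k, whose value is cb k; a leaf x_k takes value a k; inputs evaluate normally.\<close>
fun heval :: "(nat \<Rightarrow> bool) \<Rightarrow> (nat \<Rightarrow> bool) \<Rightarrow> ('y \<Rightarrow> bool) \<Rightarrow> 'y fvar nnf \<Rightarrow> bool" where
  "heval a cb ys (Lit b (Inl k)) = (if b then a k else cb k)"
| "heval a cb ys (Lit b (Inr y)) = (if b then ys y else \<not> ys y)"
| "heval a cb ys (And fs) = (\<forall>f\<in>set fs. heval a cb ys f)"
| "heval a cb ys (Or fs) = (\<exists>f\<in>set fs. heval a cb ys f)"

definition asg :: "(nat \<Rightarrow> bool) \<Rightarrow> ('y \<Rightarrow> bool) \<Rightarrow> 'y fvar \<Rightarrow> bool" where
  "asg x ys v = (case v of Inl k \<Rightarrow> x k | Inr y \<Rightarrow> ys y)"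

definition Delta :: "'y fvar nnf \<Rightarrow> nat \<Rightarrow> (nat \<Rightarrow> bool) \<Rightarrow> ('y \<Rightarrow> bool) \<Rightarrow> bool" where
  "Delta F i x ys = (\<not> (\<exists>b. eval (asg (\<lambda>k. if k < i then b k else if k = i then False else x k) ys) F))"

definition Gamma :: "'y fvar nnf \<Rightarrow> nat \<Rightarrow> (nat \<Rightarrow> bool) \<Rightarrow> ('y \<Rightarrow> bool) \<Rightarrow> bool" where
  "Gamma F i x ys = (\<not> (\<exists>b. eval (asg (\<lambda>k. if k < i then b k else if k = i then True else x k) ys) F))"

definition delta :: "'y fvar nnf \<Rightarrow> nat \<Rightarrow> (nat \<Rightarrow> bool) \<Rightarrow> ('y \<Rightarrow> bool) \<Rightarrow> bool" where
  "delta F i x ys = (\<not> heval (\<lambda>k. if k < i then True else if k = i then False else x k)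
                              (\<lambda>k. if k \<le> i then True else \<not> x k) ys F)"

definition gamma :: "'y fvar nnf \<Rightarrow> nat \<Rightarrow> (nat \<Rightarrow> bool) \<Rightarrow> ('y \<Rightarrow> bool) \<Rightarrow> bool" where
  "gamma F i x ys = (\<not> heval (\<lambda>k. if k \<le> i then True else x k)
                              (\<lambda>k. if k < i then True else if k = i then False else \<not> x k) ys F)"

end

theory Submission
  imports Defs
begin

definition okc :: "nat \<Rightarrow> 'y fvar nnf \<Rightarrow> (nat \<Rightarrow> bool) \<Rightarrow> (nat \<Rightarrow> bool) \<Rightarrow> bool" where
  "okc i F c b \<longleftrightarrow> (\<forall>k<i. ((True,Inl k)\<in>lits F \<and> (False,Inl k)\<notin>lits F \<longrightarrow> b k)
     \<and> ((False,Inl k)\<in>lits F \<and> (True,Inl k)\<notin>lits F \<longrightarrow> \<not> b k)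
     \<and> ((True,Inl k)\<in>lits F \<and> (False,Inl k)\<in>lits F \<longrightarrow> b k = c k))"

lemma mono_dir:
  "eval (asg (\<lambda>k. if k<i then b k else if k=i then v else x k) ys) F \<Longrightarrow>
   heval (\<lambda>k. if k<i then True else if k=i then v else x k)
         (\<lambda>k. if k<i then True else if k=i then \<not>v else \<not> x k) ys F"
proof (induction F)
  case (Lit b' w) then show ?case by (cases w) (auto simp: asg_def split: if_splits)
next
  case (And fs) then show ?case by (simp only: heval.simps eval.simps) blast
next
  case (Or fs) then show ?case by (simp only: heval.simps eval.simps) blast
qed

lemma main_dir:
  assumes "wDNNF F"
    and "heval (\<lambda>k. if k<i then True else if k=i then v else x k)
         (\<lambda>k. if k<i then True else if k=i then \<not>v else \<not> x k) ys F"
  shows "\<exists>c. \<forall>b. okc i F c b \<longrightarrow> eval (asg (\<lambda>k. if k<i then b k else if k=i then v else x k) ys) F"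
  using assms
proof (induction F)
  case (Lit b' w) then show ?case by (cases w) (auto simp: asg_def okc_def split: if_splits)
next
  case (Or fs)
  from Or.prems(2) obtain f where f: "f \<in> set fs" "heval (\<lambda>k. if k<i then True else if k=i then v else x k)
         (\<lambda>k. if k<i then True else if k=i then \<not>v else \<not> x k) ys f"
    by (simp only: heval.simps) blast
  have wf: "wDNNF f" using Or.prems(1) f(1) by simp
  obtain c where c: "\<forall>b. okc i f c b \<longrightarrow> eval (asg (\<lambda>k. if k<i then b k else if k=i then v else x k) ys) f"
    using Or.IH[OF f(1) wf f(2)] by blast
  define c' where "c' k = (if (True,Inl k)\<in>lits f \<and> (False,Inl k)\<notin>lits f then True
     else if (False,Inl k)\<in>lits f \<and> (True,Inl k)\<notin>lits f then False else c k)" for k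
  have "okc i f c b" if "okc i (Or fs) c' b" for b
    using that f(1) unfolding okc_def c'_def by fastforce
  then show ?case using c f(1) by (intro exI[of _ c']) (simp only: eval.simps; blast)
next
  case (And fs)
  let ?P = "\<lambda>f c. \<forall>b. okc i f c b \<longrightarrow> eval (asg (\<lambda>k. if k<i then b k else if k=i then v else x k) ys) f"
  have "\<exists>c. ?P f c" if fi: "f\<in>set fs" for f
  proof -
    have "wDNNF f" using And.prems(1) fi by simp
    moreover have "heval (\<lambda>k. if k<i then True else if k=i then v else x k)
         (\<lambda>k. if k<i then True else if k=i then \<not>v else \<not> x k) ys f"
      using And.prems(2) fi by (simp only: heval.simps)
    ultimately show ?thesis using And.IH[OF fi] by blast
  qed
  then have "\<forall>f\<in>set fs. \<exists>c. ?P f c" by blast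
  then have "\<exists>C. \<forall>f\<in>set fs. ?P f (C f)" by (rule bchoice)
  then obtain C where C: "\<forall>f\<in>set fs. ?P f (C f)" by blast
  define c' where "c' k = C (SOME f. f\<in>set fs \<and> (True,Inl k)\<in>lits f \<and> (False,Inl k)\<in>lits f) k" for k
  have uniq: "f = g" if H: "f\<in>set fs" "g \<in> set fs" "(bb, Inl k)\<in>lits f" "(\<not>bb,Inl k)\<in>lits g" for f g bb k
  proof -
    obtain p where p: "p<length fs" "fs!p = f" using H(1) by (meson in_set_conv_nth)
    obtain q where q: "q<length fs" "fs!q = g" using H(2) by (meson in_set_conv_nth)
    show ?thesis
    proof (rule ccontr)
      assume "f \<noteq> g"
      then have "p \<noteq> q" using p q by auto
      with And.prems(1) p q H(3,4) show False by auto
    qed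
  qed
  have okf: "okc i f (C f) b" if OK: "okc i (And fs) c' b" "f\<in>set fs" for b f
    unfolding okc_def
  proof (rule allI, rule impI, intro conjI)
    fix k assume k: "k<i"
    show "(True, Inl k) \<in> lits f \<and> (False, Inl k) \<notin> lits f \<longrightarrow> b k"
    proof
      assume h: "(True, Inl k) \<in> lits f \<and> (False, Inl k) \<notin> lits f"
      have "(False, Inl k) \<notin> lits (And fs)"
      proof
        assume "(False, Inl k) \<in> lits (And fs)"
        then obtain g where "g \<in> set fs" "(False, Inl k) \<in> lits g" by auto
        with uniq[of f g True k] h OK(2) show False by auto
      qed
      moreover have "(True, Inl k) \<in> lits (And fs)" using h OK(2) by auto
      ultimately show "b k" using OK(1) k unfolding okc_def by blast
    qed
    show "(False, Inl k) \<in> lits f \<and> (True, Inl k) \<notin> lits f \<longrightarrow> \<not> b k"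
    proof
      assume h: "(False, Inl k) \<in> lits f \<and> (True, Inl k) \<notin> lits f"
      have "(True, Inl k) \<notin> lits (And fs)"
      proof
        assume "(True, Inl k) \<in> lits (And fs)"
        then obtain g where "g \<in> set fs" "(True, Inl k) \<in> lits g" by auto
        with uniq[of f g False k] h OK(2) show False by auto
      qed
      moreover have "(False, Inl k) \<in> lits (And fs)" using h OK(2) by auto
      ultimately show "\<not> b k" using OK(1) k unfolding okc_def by blast
    qed
    show "(True, Inl k) \<in> lits f \<and> (False, Inl k) \<in> lits f \<longrightarrow> b k = C f k"
    proof
      assume h: "(True, Inl k) \<in> lits f \<and> (False, Inl k) \<in> lits f"
      hence ex: "\<exists>g. g\<in>set fs \<and> (True,Inl k)\<in>lits g \<and> (False,Inl k)\<in>lits g" using OK(2) by blast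
      have "(SOME g. g\<in>set fs \<and> (True,Inl k)\<in>lits g \<and> (False,Inl k)\<in>lits g) = f"
      proof -
        let ?g = "SOME g. g\<in>set fs \<and> (True,Inl k)\<in>lits g \<and> (False,Inl k)\<in>lits g"
        have g: "?g\<in>set fs \<and> (True,Inl k)\<in>lits ?g \<and> (False,Inl k)\<in>lits ?g"
          by (rule someI_ex[OF ex])
        show ?thesis using uniq[of ?g f True k, simplified] g h OK(2) by blast
      qed
      moreover have "(True, Inl k) \<in> lits (And fs)" "(False, Inl k) \<in> lits (And fs)"
        using h OK(2) by auto
      ultimately show "b k = C f k" using OK(1) k unfolding okc_def c'_def by simp
    qed
  qed
  then show ?case
  proof (intro exI[of _ c'] allI impI)
    fix b assume hb: "okc i (And fs) c' b"
    show "eval (asg (\<lambda>k. if k<i then b k else if k=i then v else x k) ys) (And fs)"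
      unfolding eval.simps
    proof
      fix f assume "f \<in> set fs"
      with C hb okf
      show "eval (asg (\<lambda>k. if k<i then b k else if k=i then v else x k) ys) f" by blast
    qed
  qed
qed

lemma equiv:
  assumes "wDNNF F"
  shows "heval (\<lambda>k. if k<i then True else if k=i then v else x k)
         (\<lambda>k. if k<i then True else if k=i then \<not>v else \<not> x k) ys F
     \<longleftrightarrow> (\<exists>b. eval (asg (\<lambda>k. if k<i then b k else if k=i then v else x k) ys) F)"
proof
  assume "heval (\<lambda>k. if k<i then True else if k=i then v else x k)
         (\<lambda>k. if k<i then True else if k=i then \<not>v else \<not> x k) ys F"
  from main_dir[OF assms this] obtain c where
    c: "\<forall>b. okc i F c b \<longrightarrow> eval (asg (\<lambda>k. if k<i then b k else if k=i then v else x k) ys) F" by blast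
  define b where "b k = (if (True,Inl k)\<in>lits F \<and> (False,Inl k)\<notin>lits F then True
     else if (False,Inl k)\<in>lits F \<and> (True,Inl k)\<notin>lits F then False else c k)" for k
  have "okc i F c b" unfolding okc_def b_def by auto
  with c show "\<exists>b. eval (asg (\<lambda>k. if k<i then b k else if k=i then v else x k) ys) F" by blast
qed (blast intro: mono_dir)

theorem theorem2:
  fixes F :: "'y fvar nnf" and n :: nat
  assumes "\<forall>k. Inl k \<in> vars F \<longrightarrow> 1 \<le> k \<and> k \<le> n"
    and "wDNNF F"
  shows "\<forall>i\<in>{1..n}. \<forall>x ys. delta F i x ys = Delta F i x ys \<and> gamma F i x ys = Gamma F i x ys"
proof (intro ballI allI conjI)
  fix i :: nat and x :: "nat \<Rightarrow> bool" and ys :: "'y \<Rightarrow> bool"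
  have e1: "(\<lambda>k. if k < i then True else if k = i then False else x k) =
     (\<lambda>k. if k<i then True else if k=i then False else x k)" by simp
  have e2: "(\<lambda>k::nat. if k \<le> i then True else \<not> x k) =
     (\<lambda>k. if k<i then True else if k=i then \<not>False else \<not> x k)" by auto
  show "delta F i x ys = Delta F i x ys"
    unfolding delta_def Delta_def e2 using equiv[OF assms(2), of i False x ys] by simp
  have e3: "(\<lambda>k::nat. if k \<le> i then True else x k) =
     (\<lambda>k. if k<i then True else if k=i then True else x k)" by auto
  have e4: "(\<lambda>k::nat. if k < i then True else if k = i then False else \<not> x k) =
     (\<lambda>k. if k<i then True else if k=i then \<not>True else \<not> x k)" by auto
  show "gamma F i x ys = Gamma F i x ys"
    unfolding gamma_def Gamma_def e3 e4 using equiv[OF assms(2), of i True x ys] by simp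
qed

end
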